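(* Let $\phi$ be the real root of $x^3=x^2+x+1$. Let $\langle a_i\rangle_{i=1}^\infty$ be a sequence of integers, not identically zero, with $a_i=a_{i+1}+a_{i+2}+a_{i+3}$ for all $i\ge 1$ and $a_1=0$. Then for every integer $n\ge 2$, either $|a_n|>0.01\phi^{n/2}$ or $|a_{n+1}|>0.01\phi^{(n+1)/2}$ (or both). *)

theory Defs
  imports Complex_Main
begin

end

theory Submission
  imports Defs
begin

definition Qf :: "real \<Rightarrow> real \<Rightarrow> real \<Rightarrow> real \<Rightarrow> real" where
 "Qf f x y z = (x + ((1-f)/2 - 1)*y + f*((1-f)/2)*z)^2 + (f^2-f-1 - ((1-f)/2)^2)*(y - f*z)^2"
definition Lf :: "real \<Rightarrow> real \<Rightarrow> real \<Rightarrow> real \<Rightarrow> real" where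
 "Lf f x y z = x + (f-1)*y + (f^2-f-1)*z"
lemma Q_step: fixes f :: real assumes "f^3 = f^2+f+1" shows "Qf f y z (x-y-z) = f * Qf f x y z"
proof -
  have "Qf f y z (x-y-z) - f * Qf f x y z = (f^3-f^2-f-1) * (z^2 + y*z - y^2 + f*z^2 + 3*f*y*z + f*y^2 - 2*f*x*z - 2*f*x*y + f*x^2 - f^2*z^2)"
    unfolding Qf_def by (simp add: field_simps power2_eq_square power3_eq_cube)
  thus ?thesis using assms by simp
qed
lemma L_step: fixes f :: real assumes "f^3 = f^2+f+1" shows "f * Lf f y z (x-y-z) = Lf f x y z"
proof -
  have "f * Lf f y z (x-y-z) - Lf f x y z = (f^3-f^2-f-1) * (x - y - z)"
    unfolding Lf_def by (simp add: algebra_simps power2_eq_square power3_eq_cube)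
  thus ?thesis using assms by simp
qed
lemma D_form: fixes f :: real assumes "f^3 = f^2+f+1" shows "Qf f 0 y z = (f + (f^2-f-1))*y^2 + (f-1)*y*z + f*z^2"
proof -
  have "Qf f 0 y z - ((f + (f^2-f-1))*y^2 + (f-1)*y*z + f*z^2) = (f^3 - f^2 - f - 1) * (f*z^2 - y*z)"
    unfolding Qf_def by (simp add: field_simps power2_eq_square power3_eq_cube)
  thus ?thesis using assms by simp
qed
lemma z_form: fixes f :: real assumes "f^3 = f^2+f+1" shows "z = f*(Lf f x y z - x - (f-1)*y)"
proof -
  have "f*(Lf f x y z - x - (f-1)*y) - z = (f^3-f^2-f-1) * z"
    unfolding Lf_def by (simp add: algebra_simps power2_eq_square power3_eq_cube)
  thus ?thesis using assms by simp
qed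
lemma phi_bounds: fixes f :: real assumes "f^3 = f^2+f+1" shows "183/100 \<le> f" "f \<le> 185/100"
proof -
  show "183/100 \<le> f"
  proof (rule ccontr)
    assume "\<not> 183/100 \<le> f"
    hence h: "f - 183/100 < 0" by simp
    define P where "P = (f - 183/100) * ((f + 415/1000)^2 + 346675/1000000)"
    have e: "f^3 - f^2 - f - 1 = P - 50413/1000000"
      unfolding P_def by (simp add: field_simps power2_eq_square power3_eq_cube)
    have "(f + 415/1000)^2 + 346675/1000000 \<ge> 0" by (simp add: add_nonneg_nonneg)
    hence "P \<le> 0" using h unfolding P_def by (simp add: mult_nonpos_nonneg)
    thus False using e assms by linarith
  qed
  show "f \<le> 185/100"
  proof (rule ccontr)
    assume "\<not> f \<le> 185/100"
    hence h: "f - 185/100 > 0" by simp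
    define P where "P = (f - 185/100) * ((f + 425/1000)^2 + 391875/1000000)"
    have e: "f^3 - f^2 - f - 1 = P + 59125/1000000"
      unfolding P_def by (simp add: field_simps power2_eq_square power3_eq_cube)
    have "(f + 425/1000)^2 + 391875/1000000 \<ge> 0" by (simp add: add_nonneg_nonneg)
    hence "P \<ge> 0" using h unfolding P_def by simp
    thus False using e assms by linarith
  qed
qed

lemma abs_prod_le: fixes c u C U :: real assumes "\<bar>c\<bar> \<le> C" "\<bar>u\<bar> \<le> U" shows "\<bar>c*u\<bar> \<le> C*U"
  using assms by (simp add: abs_mult mult_mono')

lemma sq_sum_le: fixes u v :: real shows "(u+v)^2 \<le> 2*u^2 + 2*v^2"
proof -
  have "0 \<le> (u-v)^2" by simp
  thus ?thesis by (simp add: power2_eq_square algebra_simps)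
qed

lemma Q_bound:
  fixes f x y z m :: real
  assumes r: "f^3 = f^2+f+1" and x: "\<bar>x\<bar> \<le> m" and y: "\<bar>y\<bar> \<le> m"
  shows "Qf f x y z \<le> 100*m^2 + 14*(Lf f x y z)^2"
proof -
  define l where "l = Lf f x y z"
  have f1: "183/100 \<le> f" and f2: "f \<le> 185/100" using phi_bounds[OF r] by auto
  have m0: "0 \<le> m" using x by simp
  have zf: "z = f*l - f*x - (f*(f-1))*y" using z_form[OF r, of z x y] unfolding l_def by (simp add: algebra_simps)
  have "\<bar>z\<bar> \<le> \<bar>f*l\<bar> + \<bar>f*x\<bar> + \<bar>(f*(f-1))*y\<bar>" unfolding zf by (smt (verit))
  moreover have "\<bar>f*l\<bar> \<le> 185/100 * \<bar>l\<bar>" by (rule abs_prod_le) (use f1 f2 in auto)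
  moreover have "\<bar>f*x\<bar> \<le> 185/100 * m" by (rule abs_prod_le) (use f1 f2 x in auto)
  moreover have "\<bar>(f*(f-1))*y\<bar> \<le> 16/10 * m"
  proof (rule abs_prod_le)
    have "f*(f-1) \<le> 185/100 * (85/100)" using f1 f2 by (intro mult_mono) auto
    moreover have "0 \<le> f*(f-1)" using f1 by simp
    ultimately show "\<bar>f*(f-1)\<bar> \<le> 16/10" by simp
  qed (use y in auto)
  ultimately have zb: "\<bar>z\<bar> \<le> 185/100 * \<bar>l\<bar> + 345/100 * m" by linarith
  define p where "p = (1-f)/2"
  define q where "q = f^2-f-1 - p^2"
  have Qe: "Qf f x y z = (x + (p-1)*y + (f*p)*z)^2 + q*(y - f*z)^2" unfolding Qf_def p_def q_def by simp
  have psi: "f * (f^2-f-1) = 1" using r by (simp add: algebra_simps power2_eq_square power3_eq_cube)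
  have psiu: "f^2-f-1 \<le> 5465/10000"
  proof (rule ccontr)
    assume "\<not> ?thesis"
    hence "f * (f^2-f-1) \<ge> 183/100 * (5465/10000)" using f1 by (intro mult_mono) auto
    thus False using psi by simp
  qed
  have p1: "p \<le> -415/1000" "p \<ge> -425/1000" using f1 f2 unfolding p_def by auto
  have "p^2 \<ge> (415/1000)^2"
  proof -
    have "(415/1000::real)^2 \<le> (-p)^2" by (rule power_mono) (use p1 in auto)
    thus ?thesis by simp
  qed
  moreover have "(415/1000::real)^2 = 172225/1000000" by (simp add: power2_eq_square)
  ultimately have qb: "q \<le> 375/1000" using psiu unfolding q_def by linarith
  have L1: "\<bar>x + (p-1)*y + (f*p)*z\<bar> \<le> 516/100*m + 147/100*\<bar>l\<bar>"
  proof -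
    have a: "\<bar>(p-1)*y\<bar> \<le> 1425/1000 * m" by (rule abs_prod_le) (use p1 y in auto)
    have b: "\<bar>(f*p)*z\<bar> \<le> 79/100 * (185/100 * \<bar>l\<bar> + 345/100 * m)"
    proof (rule abs_prod_le)
      have "f*(-p) \<le> 185/100 * (425/1000)" using f2 p1 f1 by (intro mult_mono) auto
      moreover have "0 \<le> f*(-p)" by (rule mult_nonneg_nonneg) (use f1 p1 in auto)
      ultimately show "\<bar>f*p\<bar> \<le> 79/100" by (simp add: abs_if)
    qed (rule zb)
    have "\<bar>x + (p-1)*y + (f*p)*z\<bar> \<le> \<bar>x\<bar> + \<bar>(p-1)*y\<bar> + \<bar>(f*p)*z\<bar>" by (smt (verit))
    moreover have "\<bar>x\<bar> + \<bar>(p-1)*y\<bar> + \<bar>(f*p)*z\<bar> \<le> m + 1425/1000 * m + 79/100 * (185/100 * \<bar>l\<bar> + 345/100 * m)"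
      by (rule add_mono[OF add_mono[OF x a] b])
    moreover have "m + 1425/1000 * m + 79/100 * (185/100 * \<bar>l\<bar> + 345/100 * m) \<le> 516/100*m + 147/100*\<bar>l\<bar>"
      using m0 by (simp add: algebra_simps)
    ultimately show ?thesis by (rule order_trans[OF order_trans])
  qed
  have L2: "\<bar>y - f*z\<bar> \<le> 740/100*m + 343/100*\<bar>l\<bar>"
  proof -
    have b: "\<bar>f*z\<bar> \<le> 185/100 * (185/100 * \<bar>l\<bar> + 345/100 * m)"
    proof (rule abs_prod_le)
      show "\<bar>f\<bar> \<le> 185/100" using f1 f2 by simp
    qed (rule zb)
    have "\<bar>y - f*z\<bar> \<le> \<bar>y\<bar> + \<bar>f*z\<bar>" by (smt (verit))
    moreover have "\<bar>y\<bar> + \<bar>f*z\<bar> \<le> m + 185/100 * (185/100 * \<bar>l\<bar> + 345/100 * m)"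
      by (rule add_mono[OF y b])
    moreover have "m + 185/100 * (185/100 * \<bar>l\<bar> + 345/100 * m) \<le> 740/100*m + 343/100*\<bar>l\<bar>"
      using m0 by (simp add: algebra_simps)
    ultimately show ?thesis by (rule order_trans[OF order_trans])
  qed
  have s1: "(x + (p-1)*y + (f*p)*z)^2 \<le> 2*(516/100*m)^2 + 2*(147/100*l)^2"
  proof -
    have "(x + (p-1)*y + (f*p)*z)^2 = \<bar>x + (p-1)*y + (f*p)*z\<bar>^2" by simp
    also have "\<dots> \<le> (516/100*m + 147/100*\<bar>l\<bar>)^2" by (rule power_mono[OF L1]) simp
    also have "\<dots> \<le> 2*(516/100*m)^2 + 2*(147/100*\<bar>l\<bar>)^2" by (rule sq_sum_le)
    also have "(147/100*\<bar>l\<bar>)^2 = (147/100*l)^2" by (simp only: power_mult_distrib power2_abs)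
    finally show ?thesis .
  qed
  have s2: "(y - f*z)^2 \<le> 2*(740/100*m)^2 + 2*(343/100*l)^2"
  proof -
    have "(y - f*z)^2 = \<bar>y - f*z\<bar>^2" by simp
    also have "\<dots> \<le> (740/100*m + 343/100*\<bar>l\<bar>)^2" by (rule power_mono[OF L2]) simp
    also have "\<dots> \<le> 2*(740/100*m)^2 + 2*(343/100*\<bar>l\<bar>)^2" by (rule sq_sum_le)
    also have "(343/100*\<bar>l\<bar>)^2 = (343/100*l)^2" by (simp only: power_mult_distrib power2_abs)
    finally show ?thesis .
  qed
  have "q*(y - f*z)^2 \<le> 375/1000 * (2*(740/100*m)^2 + 2*(343/100*l)^2)"
  proof -
    have "q*(y - f*z)^2 \<le> 375/1000 * (y - f*z)^2" by (rule mult_right_mono[OF qb]) simp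
    also have "\<dots> \<le> 375/1000 * (2*(740/100*m)^2 + 2*(343/100*l)^2)" using s2 by simp
    finally show ?thesis .
  qed
  hence "Qf f x y z \<le> 2*(516/100*m)^2 + 2*(147/100*l)^2 + 375/1000 * (2*(740/100*m)^2 + 2*(343/100*l)^2)"
    using s1 Qe by linarith
  also have "\<dots> = 943212/10000*m^2 + 13145475/1000000*l^2" by (simp add: power2_eq_square algebra_simps)
  also have "\<dots> \<le> 100*m^2 + 14*l^2" using zero_le_power2[of m] zero_le_power2[of l] by linarith
  finally show ?thesis unfolding l_def .
qed


lemma D_lower:
  fixes f u v :: real assumes r: "f^3 = f^2+f+1"
  shows "Qf f 0 u v \<ge> 14/10 * (u^2 + v^2)"
proof -
  have f1: "183/100 \<le> f" and f2: "f \<le> 185/100" using phi_bounds[OF r] by auto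
  have psi: "f * (f^2-f-1) = 1" using r by (simp add: algebra_simps power2_eq_square power3_eq_cube)
  have psi0: "f^2-f-1 \<ge> 0"
  proof (rule ccontr)
    assume "\<not> ?thesis"
    hence "f * (f^2-f-1) \<le> 0" using f1 by (intro mult_nonneg_nonpos) auto
    thus False using psi by simp
  qed
  have psil: "f^2-f-1 \<ge> 54/100"
  proof (rule ccontr)
    assume "\<not> ?thesis"
    hence "f * (f^2-f-1) \<le> 185/100 * (54/100)" using f1 f2 psi0 by (intro mult_mono) auto
    thus False using psi by simp
  qed
  have "0 \<le> (f-1) * (u+v)^2" using f1 by simp
  moreover have "(f-1) * (u+v)^2 = (f-1)*(u^2+v^2) + 2*((f-1)*u*v)" by (simp add: power2_eq_square algebra_simps)
  ultimately have c: "2*((f-1)*u*v) \<ge> -((f-1)*(u^2+v^2))" by linarith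
  have "(f-1)*(u^2+v^2) \<le> 85/100 * (u^2+v^2)" using f2 by (intro mult_right_mono) auto
  hence c2: "(f-1)*u*v \<ge> -(425/1000) * u^2 - (425/1000) * v^2" using c by (simp add: algebra_simps)
  have a: "(f + (f^2-f-1))*u^2 \<ge> 237/100 * u^2" using f1 psil by (intro mult_right_mono) auto
  have b: "f*v^2 \<ge> 183/100 * v^2" using f1 by (intro mult_right_mono) auto
  have "Qf f 0 u v = (f + (f^2-f-1))*u^2 + (f-1)*u*v + f*v^2" by (rule D_form[OF r])
  hence "14/10 * u^2 + 14/10 * v^2 \<le> Qf f 0 u v" using a b c2 zero_le_power2[of u] zero_le_power2[of v] by linarith
  thus ?thesis by (simp add: algebra_simps)
qed

lemma L1_upper:
  fixes f u v :: real assumes r: "f^3 = f^2+f+1"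
  shows "(Lf f 0 u v)^2 \<le> 103/100 * (u^2 + v^2)"
proof -
  have f1: "183/100 \<le> f" and f2: "f \<le> 185/100" using phi_bounds[OF r] by auto
  have psi: "f * (f^2-f-1) = 1" using r by (simp add: algebra_simps power2_eq_square power3_eq_cube)
  have psiu: "f^2-f-1 \<le> 5465/10000"
  proof (rule ccontr)
    assume "\<not> ?thesis"
    hence "f * (f^2-f-1) \<ge> 183/100 * (5465/10000)" using f1 by (intro mult_mono) auto
    thus False using psi by simp
  qed
  have psi0: "f^2-f-1 \<ge> 0"
  proof (rule ccontr)
    assume "\<not> ?thesis"
    hence "f * (f^2-f-1) \<le> 0" using f1 by (intro mult_nonneg_nonpos) auto
    thus False using psi by simp
  qed
  define c where "c = f - 1"
  define d where "d = f^2-f-1"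
  have cs: "c^2 \<le> (85/100)^2" unfolding c_def by (rule power_mono) (use f1 f2 in auto)
  have ds: "d^2 \<le> (5465/10000)^2" unfolding d_def by (rule power_mono) (use psiu psi0 in auto)
  have cd: "c^2 + d^2 \<le> 103/100" using cs ds by (simp add: power2_eq_square)
  have "(Lf f 0 u v)^2 = (c*u + d*v)^2" unfolding Lf_def c_def d_def by simp
  also have "\<dots> \<le> (c*u + d*v)^2 + (c*v - d*u)^2" by simp
  also have "\<dots> = (c^2 + d^2) * (u^2+v^2)" by (simp add: power2_eq_square algebra_simps)
  also have "\<dots> \<le> 103/100 * (u^2+v^2)" by (rule mult_right_mono[OF cd]) simp
  finally show ?thesis .
qed


lemma sq_powr_half: fixes f :: real assumes "0 < f" shows "(f powr (real j / 2))^2 = f^j"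
proof -
  have "(f powr (real j / 2))^2 = f powr (real j / 2) * f powr (real j / 2)" by (simp add: power2_eq_square)
  also have "\<dots> = f powr (real j / 2 + real j / 2)" by (rule powr_add[symmetric])
  also have "real j / 2 + real j / 2 = real j" by simp
  finally show ?thesis using powr_realpow[OF assms] by simp
qed

theorem corollary1:
  fixes \<phi> :: real and a :: "nat \<Rightarrow> int" and n :: nat
  assumes phi_root: "\<phi> ^ 3 = \<phi> ^ 2 + \<phi> + 1"
    and nonzero: "\<exists>i\<ge>1. a i \<noteq> 0"
    and rec: "\<And>i. i \<ge> 1 \<Longrightarrow> a i = a (i + 1) + a (i + 2) + a (i + 3)"
    and a1: "a 1 = 0"
    and n2: "n \<ge> 2"
  shows "\<bar>real_of_int (a n)\<bar> > 0.01 * \<phi> powr (real n / 2)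
       \<or> \<bar>real_of_int (a (n + 1))\<bar> > 0.01 * \<phi> powr (real (n + 1) / 2)"
proof -
  define r where "r i = real_of_int (a i)" for i
  have f1: "183/100 \<le> \<phi>" and f2: "\<phi> \<le> 185/100" using phi_bounds[OF phi_root] by auto
  have fpos: "0 < \<phi>" using f1 by simp
  have fwd: "a (i+3) = a i - a (i+1) - a (i+2)" if "i \<ge> 1" for i
    using rec[OF that] by simp
  have fwdr: "r (i+3) = r i - r (i+1) - r (i+2)" if "i \<ge> 1" for i
    unfolding r_def using fwd[OF that] by simp
  have Qseq: "Qf \<phi> (r (k+1)) (r (k+2)) (r (k+3)) = \<phi>^k * Qf \<phi> (r 1) (r 2) (r 3)" for k
  proof (induction k)
    case 0 show ?case by (simp add: numeral_2_eq_2 numeral_3_eq_3)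
  next
    case (Suc k)
    have e0: "r (k+1+3) = r (k+1) - r (k+1+1) - r (k+1+2)" by (rule fwdr) simp
    have i: "k+1+3 = k+4" "k+1+1 = k+2" "k+1+2 = k+3" by simp_all
    have i2: "Suc k + 1 = k+2" "Suc k + 2 = k+3" "Suc k + 3 = k+4" by simp_all
    have e: "r (k+4) = r (k+1) - r (k+2) - r (k+3)" using e0 unfolding i .
    have "Qf \<phi> (r (k+2)) (r (k+3)) (r (k+4)) = \<phi> * Qf \<phi> (r (k+1)) (r (k+2)) (r (k+3))"
      unfolding e by (rule Q_step[OF phi_root])
    also have "\<dots> = \<phi>^(Suc k) * Qf \<phi> (r 1) (r 2) (r 3)" using Suc.IH by simp
    finally show ?case unfolding i2 .
  qed
  have Lseq: "\<phi>^k * Lf \<phi> (r (k+1)) (r (k+2)) (r (k+3)) = Lf \<phi> (r 1) (r 2) (r 3)" for k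
  proof (induction k)
    case 0 show ?case by (simp add: numeral_2_eq_2 numeral_3_eq_3)
  next
    case (Suc k)
    have e0: "r (k+1+3) = r (k+1) - r (k+1+1) - r (k+1+2)" by (rule fwdr) simp
    have i: "k+1+3 = k+4" "k+1+1 = k+2" "k+1+2 = k+3" by simp_all
    have i2: "Suc k + 1 = k+2" "Suc k + 2 = k+3" "Suc k + 3 = k+4" by simp_all
    have e: "r (k+4) = r (k+1) - r (k+2) - r (k+3)" using e0 unfolding i .
    have "\<phi> * Lf \<phi> (r (k+2)) (r (k+3)) (r (k+4)) = Lf \<phi> (r (k+1)) (r (k+2)) (r (k+3))"
      unfolding e by (rule L_step[OF phi_root])
    hence "\<phi>^k * (\<phi> * Lf \<phi> (r (k+2)) (r (k+3)) (r (k+4))) = Lf \<phi> (r 1) (r 2) (r 3)"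
      using Suc.IH by simp
    hence "\<phi>^(Suc k) * Lf \<phi> (r (k+2)) (r (k+3)) (r (k+4)) = Lf \<phi> (r 1) (r 2) (r 3)"
      by (simp only: power_Suc2 mult.assoc)
    thus ?case unfolding i2 .
  qed
  have a23: "a 2 \<noteq> 0 \<or> a 3 \<noteq> 0"
  proof (rule ccontr)
    assume "\<not> ?thesis"
    hence z2: "a 2 = 0" and z3: "a 3 = 0" by auto
    have "a i = 0" if "i \<ge> 1" for i
      using that
    proof (induction i rule: less_induct)
      case (less i)
      show ?case
      proof (cases "i \<le> 3")
        case True
        hence "i = 1 \<or> i = 2 \<or> i = 3" using less.prems by auto
        thus ?thesis using a1 z2 z3 by auto
      next
        case False
        define j where "j = i - 3"
        have j: "i = j + 3" "j \<ge> 1" using False unfolding j_def by auto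
        have "a j = 0" "a (j+1) = 0" "a (j+2) = 0" using less.IH j by auto
        thus ?thesis using fwd[OF j(2)] j(1) by simp
      qed
    qed
    thus False using nonzero by auto
  qed
  have Sint: "(a 2)^2 + (a 3)^2 \<ge> 1"
  proof -
    have "(a 2)^2 \<ge> 0" "(a 3)^2 \<ge> 0" by auto
    moreover have "(a 2)^2 \<ge> 1 \<or> (a 3)^2 \<ge> 1"
    proof (cases "a 2 = 0")
      case True
      hence "a 3 \<noteq> 0" using a23 by simp
      hence "(a 3)^2 > 0" by simp
      thus ?thesis by linarith
    next
      case False
      hence "(a 2)^2 > 0" by simp
      thus ?thesis by linarith
    qed
    ultimately show ?thesis by linarith
  qed
  have S1: "(r 2)^2 + (r 3)^2 \<ge> 1"
  proof -
    have "real_of_int ((a 2)^2 + (a 3)^2) \<ge> 1" using Sint by linarith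
    thus ?thesis unfolding r_def by simp
  qed
  show ?thesis
  proof (cases "n = 2")
    case True
    show ?thesis
    proof (cases "a 2 = 0")
      case False
      hence "\<bar>real_of_int (a 2)\<bar> \<ge> 1" by linarith
      moreover have "0.01 * \<phi> powr (real 2 / 2) < 1" using f2 fpos by simp
      ultimately show ?thesis using True by auto
    next
      case True2: True
      hence "a 3 \<noteq> 0" using a23 by simp
      hence "\<bar>real_of_int (a 3)\<bar> \<ge> 1" by linarith
      moreover have "0.01 * \<phi> powr (real (2+1) / 2) < 1"
      proof -
        have "\<phi> powr (real (2+1) / 2) \<le> \<phi> powr (real 2)" by (rule powr_mono) (use f1 in auto)
        also have "\<dots> = \<phi>^2" using powr_realpow[OF fpos] by blast
        also have "\<dots> \<le> (185/100)^2" by (rule power_mono) (use f2 fpos in auto)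
        finally show ?thesis by (simp add: power2_eq_square)
      qed
      ultimately show ?thesis using True by auto
    qed
  next
    case False
    hence n3: "n \<ge> 3" using n2 by simp
    show ?thesis
    proof (rule ccontr)
      assume "\<not> ?thesis"
      hence hx0: "\<bar>r n\<bar> \<le> 0.01 * \<phi> powr (real n / 2)"
        and hy: "\<bar>r (n+1)\<bar> \<le> 0.01 * \<phi> powr (real (n + 1) / 2)" unfolding r_def by auto
      define m where "m = 0.01 * \<phi> powr (real (n + 1) / 2)"
      have "\<phi> powr (real n / 2) \<le> \<phi> powr (real (n + 1) / 2)" by (rule powr_mono) (use f1 in auto)
      hence "0.01 * \<phi> powr (real n / 2) \<le> 0.01 * \<phi> powr (real (n + 1) / 2)" by (rule mult_left_mono) simp
      hence hx: "\<bar>r n\<bar> \<le> m" using hx0 unfolding m_def by (rule order_trans[rotated])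
      have hy': "\<bar>r (n+1)\<bar> \<le> m" using hy unfolding m_def .
      define k where "k = n - 1"
      have k: "n = k + 1" "k \<ge> 2" using n3 unfolding k_def by auto
      define x where "x = r (k+1)"
      define y where "y = r (k+2)"
      define z where "z = r (k+3)"
      define X where "X = \<phi>^k"
      define D where "D = Qf \<phi> 0 (r 2) (r 3)"
      define S where "S = (r 2)^2 + (r 3)^2"
      define l where "l = Lf \<phi> x y z"
      define l1 where "l1 = Lf \<phi> 0 (r 2) (r 3)"
      have r1: "r 1 = 0" unfolding r_def using a1 by simp
      have hxx: "\<bar>x\<bar> \<le> m" using hx k unfolding x_def by simp
      have hyy: "\<bar>y\<bar> \<le> m" using hy' k unfolding y_def by (simp add: add.assoc)
      have QB: "Qf \<phi> x y z \<le> 100*m^2 + 14*l^2" unfolding l_def by (rule Q_bound[OF phi_root hxx hyy])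
      have QX: "Qf \<phi> x y z = X * D" unfolding x_def y_def z_def X_def D_def using Qseq[of k] r1 by simp
      have LX: "X * l = l1" unfolding x_def y_def z_def X_def l_def l1_def using Lseq[of k] r1 by simp
      have DS: "D \<ge> 14/10 * S" unfolding D_def S_def by (rule D_lower[OF phi_root])
      have LS: "l1^2 \<le> 103/100 * S" unfolding l1_def S_def by (rule L1_upper[OF phi_root])
      have S1': "S \<ge> 1" unfolding S_def using S1 .
      have m2: "m^2 = \<phi>^2 * X / 10000"
      proof -
        have "m^2 = (1/10000) * (\<phi> powr (real (n + 1) / 2))^2" unfolding m_def by (simp add: power_mult_distrib power2_eq_square)
        also have "\<dots> = (1/10000) * \<phi>^(n+1)" using sq_powr_half[OF fpos, of "n+1"] by simp
        also have "\<phi>^(n+1) = \<phi>^2 * X" unfolding X_def k by (simp add: power_add algebra_simps power2_eq_square)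
        finally show ?thesis by simp
      qed
      have X0: "X \<ge> 0" unfolding X_def using fpos by simp
      have Xge: "X \<ge> \<phi>^2" unfolding X_def by (rule power_increasing) (use k f1 in auto)
      have phi2: "\<phi>^2 \<ge> 3" "\<phi>^2 \<le> 343/100"
      proof -
        have "(183/100)^2 \<le> \<phi>^2" by (rule power_mono) (use f1 in auto)
        thus "\<phi>^2 \<ge> 3" by (simp add: power2_eq_square)
        have "\<phi>^2 \<le> (185/100)^2" by (rule power_mono) (use f2 f1 in auto)
        thus "\<phi>^2 \<le> 343/100" by (simp add: power2_eq_square)
      qed
      have X3: "X \<ge> 3" using Xge phi2 by linarith
      define T where "T = X^3"
      have T27: "T \<ge> 27"
      proof -
        have "(3::real)^3 \<le> X^3" by (rule power_mono) (use X3 in auto)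
        thus ?thesis unfolding T_def by simp
      qed
      have "X * D \<le> 100*m^2 + 14*l^2" using QB QX by simp
      hence "X^2 * (X * D) \<le> X^2 * (100*m^2 + 14*l^2)" by (rule mult_left_mono) simp
      also have "X^2 * (100*m^2 + 14*l^2) = \<phi>^2 * T / 100 + 14 * l1^2"
        unfolding m2 T_def LX[symmetric] by (simp add: power2_eq_square power3_eq_cube algebra_simps)
      finally have A: "T * D \<le> \<phi>^2 * T / 100 + 14 * l1^2"
        unfolding T_def by (simp add: power2_eq_square power3_eq_cube algebra_simps)
      have B: "T * D \<ge> T * (14/10 * S)" by (rule mult_left_mono[OF DS]) (use T27 in simp)
      have C: "\<phi>^2 * T \<le> 343/100 * T" by (rule mult_right_mono[OF phi2(2)]) (use T27 in simp)
      have E: "T \<le> T * S" using S1' T27 by (simp add: mult_le_cancel_left1)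
      have "T * (14/10 * S) \<le> 343/10000 * (T * S) + 1442/100 * S"
        using A B C E LS by linarith
      hence "S * (T * (14/10) - 343/10000 * T - 1442/100) \<le> 0" by (simp add: algebra_simps)
      moreover have "T * (14/10) - 343/10000 * T - 1442/100 > 0" using T27 by linarith
      ultimately show False using S1' by (simp add: mult_le_0_iff)
    qed
  qed
qed

end
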